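(* Let $\nu\in[0,1]$, let $\|u\|_C=[(1-\nu)\|u\|_1^2+\nu\|u\|_2^2]^{1/2}$ on $\mathbb{R}^N$ and $\|\cdot\|_R=\|\cdot\|_2$ on $\mathbb{R}^P$, and let $F(A)=(1-\nu)\sum_{i,j=1}^N|A_{ij}|+\nu\operatorname{tr}A$ for symmetric $A\in\mathbb{R}^{N\times N}$ (so that $F(uu^\top)=\|u\|_C^2$). Then for every $X\in\mathbb{R}^{N\times P}$, $$\|X\|_D\ \ge\ \inf\Big\{\tfrac12F(A)+\tfrac12\operatorname{tr}\big(X^\top A^{+}X\big)\;:\;A\in\mathbb{R}^{N\times N},\ A\succeq0,\ \operatorname{range}(X)\subseteq\operatorname{range}(A)\Big\},$$ where $A^+$ is the Moore–Penrose pseudo-inverse.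
   Context: For $M\ge 1$ and $X\in\mathbb{R}^{N\times P}$, $f_D^M(X)=\inf\{\tfrac12\sum_{m=1}^M(\|u_m\|_C^2+\|v_m\|_R^2): U=[u_1,\dots,u_M]\in\mathbb{R}^{N\times M}, V=[v_1,\dots,v_M]\in\mathbb{R}^{P\times M}, X=UV^\top\}$ (with $\inf\emptyset=+\infty$), and the decomposition norm is $\|X\|_D=\lim_{M\to\infty}f_D^M(X)$. *)

theory Defs
  imports "HOL-Analysis.Analysis"
begin

definition normC :: "real \<Rightarrow> real^'n \<Rightarrow> real" where
  "normC \<nu> u = sqrt ((1 - \<nu>) * (\<Sum>i\<in>UNIV. \<bar>u $ i\<bar>)\<^sup>2 + \<nu> * (norm u)\<^sup>2)"

definition normR :: "real^'p \<Rightarrow> real" where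
  "normR v = norm v"

text \<open>f_D^M(X): infimum over factorisations X = U V^T with M columns, U = [u_0..u_{M-1}],
  V = [v_0..v_{M-1}]; the entry (i,j) of U V^T is the sum over m of u_m(i) v_m(j).
  Infimum in ereal, so inf of the empty set is +infinity.\<close>
definition fD :: "real \<Rightarrow> nat \<Rightarrow> real^'p^'n \<Rightarrow> ereal" where
  "fD \<nu> M X = Inf {ereal ((1/2) * (\<Sum>m<M. (normC \<nu> (u m))\<^sup>2 + (normR (v m))\<^sup>2)) | u v.
       X = (\<chi> i j. \<Sum>m<M. u m $ i * v m $ j)}"

definition normD :: "real \<Rightarrow> real^'p^'n \<Rightarrow> ereal" where
  "normD \<nu> X = lim (\<lambda>M. fD \<nu> M X)"

definition Ffun :: "real \<Rightarrow> real^'n^'n \<Rightarrow> real" where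
  "Ffun \<nu> A = (1 - \<nu>) * (\<Sum>i\<in>UNIV. \<Sum>j\<in>UNIV. \<bar>A $ i $ j\<bar>) + \<nu> * trace A"

definition psd :: "real^'n^'n \<Rightarrow> bool" where
  "psd A \<longleftrightarrow> transpose A = A \<and> (\<forall>x. 0 \<le> x \<bullet> (A *v x))"

definition pinv :: "real^'m^'n \<Rightarrow> real^'n^'m" where
  "pinv A = (THE B. A ** B ** A = A \<and> B ** A ** B = B \<and>
                    transpose (A ** B) = A ** B \<and> transpose (B ** A) = B ** A)"

end

theory Submission imports Defs begin

definition Amat :: "real \<Rightarrow> nat \<Rightarrow> (nat \<Rightarrow> real^'n) \<Rightarrow> real^'n^'n" where
  "Amat e M u = (\<chi> i j. (if i = j then e else 0) + (\<Sum>m<M. u m $ i * u m $ j))"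

lemma Amat_mulv: "Amat e M u *v y = e *\<^sub>R y + (\<Sum>m<M. (u m \<bullet> y) *\<^sub>R u m)"
proof -
  have "(Amat e M u *v y) $ i = (e *\<^sub>R y + (\<Sum>m<M. (u m \<bullet> y) *\<^sub>R u m)) $ i" for i
  proof -
    have "(Amat e M u *v y) $ i = (\<Sum>j\<in>UNIV. ((if i = j then e else 0) + (\<Sum>m<M. u m $ i * u m $ j)) * y $ j)"
      by (simp add: Amat_def matrix_vector_mult_def)
    also have "\<dots> = (\<Sum>j\<in>UNIV. (if i = j then e else 0) * y $ j) + (\<Sum>j\<in>UNIV. \<Sum>m<M. u m $ i * u m $ j * y $ j)"
      by (simp add: distrib_right sum.distrib sum_distrib_right)
    also have "\<dots> = e * y $ i + (\<Sum>m<M. \<Sum>j\<in>UNIV. u m $ i * u m $ j * y $ j)"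
      by (simp add: sum.swap[of _ UNIV] if_distrib[of "\<lambda>a. a * _"] cong: if_cong)
    also have "\<dots> = (e *\<^sub>R y + (\<Sum>m<M. (u m \<bullet> y) *\<^sub>R u m)) $ i"
      by (simp add: inner_vec_def sum_component sum_distrib_left mult.commute mult.left_commute)
    finally show ?thesis .
  qed
  then show ?thesis by (simp add: vec_eq_iff)
qed

lemma Amat_quad: "y \<bullet> (Amat e M u *v y) = e * (y \<bullet> y) + (\<Sum>m<M. (u m \<bullet> y)^2)"
  by (simp add: Amat_mulv inner_add_right inner_sum_right power2_eq_square inner_commute)

lemma Amat_sym: "transpose (Amat e M u) = Amat e M u"
  by (simp add: Amat_def transpose_def vec_eq_iff mult.commute)

lemma Amat_psd: "e \<ge> 0 \<Longrightarrow> psd (Amat e M u)"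
  unfolding psd_def by (simp add: Amat_sym Amat_quad sum_nonneg)

lemma Amat_inv: assumes "e > 0" shows "invertible (Amat e M u)"
proof -
  have "inj ((*v) (Amat e M u))"
  proof (rule injI)
    fix x y assume "Amat e M u *v x = Amat e M u *v y"
    then have "Amat e M u *v (x - y) = 0" by (simp add: matrix_vector_mult_diff_distrib)
    then have "(x - y) \<bullet> (Amat e M u *v (x - y)) = 0" by simp
    moreover have "(\<Sum>m<M. (u m \<bullet> (x-y))^2) \<ge> 0" by (simp add: sum_nonneg)
    ultimately have "e * ((x-y) \<bullet> (x-y)) \<le> 0" unfolding Amat_quad by linarith
    with assms have "(x-y) \<bullet> (x-y) \<le> 0" by (simp add: mult_le_0_iff)
    then have "x - y = 0" using inner_gt_zero_iff[of "x-y"] by linarith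
    then show "x = y" by simp
  qed
  then show ?thesis
    using matrix_left_invertible_injective invertible_left_inverse by blast
qed


lemma pinv_eq: assumes "B ** A = mat 1" "A ** B = mat 1" shows "pinv A = B"
  unfolding pinv_def
proof (rule the_equality)
  show "A ** B ** A = A \<and> B ** A ** B = B \<and> transpose (A ** B) = A ** B \<and> transpose (B ** A) = B ** A"
    using assms by (simp add: matrix_mul_assoc[symmetric])
next
  fix C assume "A ** C ** A = A \<and> C ** A ** C = C \<and> transpose (A ** C) = A ** C \<and> transpose (C ** A) = C ** A"
  then have "B ** (A ** C ** A) ** B = B ** A ** B" by simp
  moreover have "B ** (A ** C ** A) ** B = (B ** A) ** C ** (A ** B)" by (simp add: matrix_mul_assoc)
  ultimately show "C = B" using assms by simp
qed

lemma key_col: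
  fixes u :: "nat \<Rightarrow> real^'n"
  assumes e: "e \<ge> 0" and xy: "Amat e M u *v y = x" and x: "x = (\<chi> i. \<Sum>m<M. u m $ i * w m)"
  shows "x \<bullet> y \<le> (\<Sum>m<M. (w m)^2)"
proof -
  define t where "t = x \<bullet> y"
  have t1: "t = (\<Sum>m<M. w m * (u m \<bullet> y))"
    unfolding t_def x by (simp add: inner_vec_def sum_distrib_left sum_distrib_right sum.swap[of _ UNIV] mult.commute mult.left_commute)
  have t2: "t = e * (y \<bullet> y) + (\<Sum>m<M. (u m \<bullet> y)^2)"
    unfolding t_def using Amat_quad[of y e M u] xy by (simp add: inner_commute)
  have s: "(\<Sum>m<M. (u m \<bullet> y)^2) \<le> t" using t2 e by (simp add: mult_nonneg_nonneg)
  have t0: "0 \<le> t" using t2 e by (simp add: sum_nonneg mult_nonneg_nonneg)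
  have "t^2 \<le> (\<Sum>m<M. (w m)^2) * (\<Sum>m<M. (u m \<bullet> y)^2)"
    unfolding t1 by (rule Cauchy_Schwarz_ineq_sum)
  also have "\<dots> \<le> (\<Sum>m<M. (w m)^2) * t"
    by (rule mult_left_mono[OF s]) (simp add: sum_nonneg)
  finally have "t * t \<le> (\<Sum>m<M. (w m)^2) * t" by (simp add: power2_eq_square)
  then have tt: "t * t \<le> (\<Sum>m<M. (w m)^2) * t" .
  have "t \<le> (\<Sum>m<M. (w m)^2)"
  proof (cases "t = 0")
    case True then show ?thesis by (simp add: sum_nonneg)
  next
    case False with t0 have "t > 0" by simp
    then show ?thesis using tt mult_right_le_imp_le by blast
  qed
  then show ?thesis by (simp add: t_def)
qed

lemma trace_cols:
  fixes X :: "real^'p^'n" and B :: "real^'n^'n"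
  shows "trace (transpose X ** B ** X) = (\<Sum>j\<in>UNIV. (\<chi> i. X$i$j) \<bullet> (B *v (\<chi> i. X$i$j)))"
  unfolding trace_def
proof (rule sum.cong[OF refl])
  fix j
  have "(transpose X ** B ** X) $ j $ j = (\<Sum>k\<in>UNIV. (\<Sum>i\<in>UNIV. X$i$j * B$i$k) * X$k$j)"
    by (simp add: matrix_matrix_mult_def transpose_def)
  also have "\<dots> = (\<Sum>k\<in>UNIV. \<Sum>i\<in>UNIV. X$i$j * B$i$k * X$k$j)"
    by (simp add: sum_distrib_right)
  also have "\<dots> = (\<Sum>i\<in>UNIV. \<Sum>k\<in>UNIV. X$i$j * B$i$k * X$k$j)"
    by (rule sum.swap)
  also have "\<dots> = (\<chi> i. X$i$j) \<bullet> (B *v (\<chi> i. X$i$j))"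
    by (simp add: inner_vec_def matrix_vector_mult_def sum_distrib_left mult.assoc)
  finally show "(transpose X ** B ** X) $ j $ j = (\<chi> i. X$i$j) \<bullet> (B *v (\<chi> i. X$i$j))" .
qed

lemma sq_sum_abs: "(\<Sum>i\<in>A. a i)^2 = (\<Sum>i\<in>A. \<Sum>j\<in>A. (a i :: real) * a j)"
  by (simp add: power2_eq_square sum_product)

lemma F_bound:
  fixes u :: "nat \<Rightarrow> real^'n"
  assumes "0 \<le> \<nu>" "\<nu> \<le> 1" "e \<ge> 0"
  shows "Ffun \<nu> (Amat e M u) \<le> e * CARD('n) + (\<Sum>m<M. (normC \<nu> (u m))^2)"
proof -
  have abs: "(\<Sum>i\<in>UNIV. \<Sum>j\<in>UNIV. \<bar>Amat e M u $ i $ j\<bar>) \<le> e * CARD('n) + (\<Sum>m<M. (\<Sum>i\<in>UNIV. \<bar>u m $ i\<bar>)^2)"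
  proof -
    have "(\<Sum>i\<in>UNIV. \<Sum>j\<in>UNIV. \<bar>Amat e M u $ i $ j\<bar>) \<le>
       (\<Sum>i\<in>UNIV. \<Sum>j\<in>UNIV. (if i = j then e else 0) + (\<Sum>m<M. \<bar>u m $ i\<bar> * \<bar>u m $ j\<bar>))"
    proof (intro sum_mono)
      fix i j
      have "\<bar>Amat e M u $ i $ j\<bar> \<le> \<bar>if i = j then e else 0\<bar> + \<bar>\<Sum>m<M. u m $ i * u m $ j\<bar>"
        by (simp add: Amat_def abs_triangle_ineq)
      also have "\<dots> \<le> (if i = j then e else 0) + (\<Sum>m<M. \<bar>u m $ i\<bar> * \<bar>u m $ j\<bar>)"
        using assms(3) by (intro add_mono) (auto simp: abs_mult[symmetric] intro: sum_abs[THEN order_trans])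
      finally show "\<bar>Amat e M u $ i $ j\<bar> \<le> (if i = j then e else 0) + (\<Sum>m<M. \<bar>u m $ i\<bar> * \<bar>u m $ j\<bar>)" .
    qed
    also have "\<dots> = e * CARD('n) + (\<Sum>m<M. (\<Sum>i\<in>UNIV. \<bar>u m $ i\<bar>)^2)"
      by (simp add: sum.distrib sq_sum_abs sum.swap[of _ "{..<M}"] mult.commute)
    finally show ?thesis .
  qed
  have tr: "trace (Amat e M u) = e * CARD('n) + (\<Sum>m<M. (norm (u m))^2)"
    by (simp add: trace_def Amat_def sum.distrib power2_norm_eq_inner inner_vec_def sum.swap[of _ "{..<M}"] mult.commute)
  have nc: "(normC \<nu> w)^2 = (1 - \<nu>) * (\<Sum>i\<in>UNIV. \<bar>w $ i\<bar>)\<^sup>2 + \<nu> * (norm w)\<^sup>2" for w :: "real^'n"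
    unfolding normC_def using assms by (intro real_sqrt_pow2) simp
  have "Ffun \<nu> (Amat e M u) \<le> (1 - \<nu>) * (e * CARD('n) + (\<Sum>m<M. (\<Sum>i\<in>UNIV. \<bar>u m $ i\<bar>)^2)) + \<nu> * trace (Amat e M u)"
    unfolding Ffun_def using abs assms by (intro add_mono mult_left_mono) auto
  also have "\<dots> = e * CARD('n) + (\<Sum>m<M. (normC \<nu> (u m))^2)"
  proof -
    have "(\<Sum>m<M. (normC \<nu> (u m))^2) = (1 - \<nu>) * (\<Sum>m<M. (\<Sum>i\<in>UNIV. \<bar>u m $ i\<bar>)^2) + \<nu> * (\<Sum>m<M. (norm (u m))^2)"
      unfolding nc by (simp only: sum.distrib sum_distrib_left)
    then show ?thesis unfolding tr by (simp add: algebra_simps)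
  qed
  finally show ?thesis .
qed


lemma fD_step:
  fixes X :: "real^'p^'n" and u :: "nat \<Rightarrow> real^'n" and v :: "nat \<Rightarrow> real^'p"
  assumes X: "X = (\<chi> i j. \<Sum>m<M. u m $ i * v m $ j)"
  shows "fD \<nu> (Suc M) X \<le> ereal ((1/2) * (\<Sum>m<M. (normC \<nu> (u m))\<^sup>2 + (normR (v m))\<^sup>2))"
proof -
  define u' where "u' = u(M := 0)"
  define v' where "v' = v(M := 0)"
  have e1: "(\<Sum>m<Suc M. u' m $ i * v' m $ j) = (\<Sum>m<M. u m $ i * v m $ j)" for i j
    by (simp add: u'_def v'_def)
  have e2: "(\<Sum>m<Suc M. (normC \<nu> (u' m))\<^sup>2 + (normR (v' m))\<^sup>2) = (\<Sum>m<M. (normC \<nu> (u m))\<^sup>2 + (normR (v m))\<^sup>2)"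
    by (simp add: u'_def v'_def normC_def normR_def)
  have X': "X = (\<chi> i j. \<Sum>m<Suc M. u' m $ i * v' m $ j)" using X e1 by simp
  show ?thesis unfolding fD_def
    apply (rule Inf_lower2[of "ereal ((1/2) * (\<Sum>m<Suc M. (normC \<nu> (u' m))\<^sup>2 + (normR (v' m))\<^sup>2))"])
    using X' apply blast
    by (simp only: e2 order_refl)
qed

lemma fD_dec: fixes X :: "real^'p^'n" shows "decseq (\<lambda>M. fD \<nu> M X)"
proof (rule decseq_SucI)
  fix M
  show "fD \<nu> (Suc M) X \<le> fD \<nu> M X"
    unfolding fD_def[of \<nu> M X] by (rule Inf_greatest) (use fD_step in blast)
qed

theorem mainTheorem6:
  fixes \<nu> :: real and X :: "real^'p^'n"
  assumes "0 \<le> \<nu>" and "\<nu> \<le> 1"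
  shows "normD \<nu> X \<ge>
    Inf {ereal ((1/2) * Ffun \<nu> A + (1/2) * trace (transpose X ** pinv A ** X)) | A :: real^'n^'n.
           psd A \<and> range (\<lambda>x. X *v x) \<subseteq> range (\<lambda>y. A *v y)}"
  (is "_ \<ge> ?S")
proof -
  have "normD \<nu> X = (INF M. fD \<nu> M X)"
    unfolding normD_def by (rule limI[OF LIMSEQ_INF[OF fD_dec]])
  moreover have "?S \<le> fD \<nu> M X" for M
  proof -
   have step: "?S \<le> ereal ((1/2) * (\<Sum>m<M. (normC \<nu> (u m))\<^sup>2 + (normR (v m))\<^sup>2))"
     if X: "X = (\<chi> i j. \<Sum>m<M. u m $ i * v m $ j)"
     for u :: "nat \<Rightarrow> real^'n" and v :: "nat \<Rightarrow> real^'p"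
   proof -
    define c where "c = (1/2) * (\<Sum>m<M. (normC \<nu> (u m))\<^sup>2 + (normR (v m))\<^sup>2)"
    have "?S \<le> ereal c"
    proof (rule ereal_le_epsilon2)
      fix e :: real assume e: "0 < e"
      define e1 where "e1 = e / real CARD('n)"
      have e1: "0 < e1" using e by (simp add: e1_def)
      define A where "A = Amat e1 M u"
      obtain B where AB: "A ** B = mat 1" "B ** A = mat 1"
        using Amat_inv[OF e1] unfolding A_def invertible_def by blast
      have pB: "pinv A = B" using pinv_eq AB by blast
      have psdA: "psd A" unfolding A_def using e1 by (simp add: Amat_psd)
      have rng: "range (\<lambda>x. X *v x) \<subseteq> range (\<lambda>y. A *v y)"
      proof clarify
        fix x
        have "X *v x = A *v (B *v (X *v x))" by (simp add: matrix_vector_mul_assoc matrix_mul_assoc AB)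
        then show "X *v x \<in> range (\<lambda>y. A *v y)" by blast
      qed
      have tr: "trace (transpose X ** pinv A ** X) \<le> (\<Sum>m<M. (normR (v m))\<^sup>2)"
      proof -
        have "trace (transpose X ** pinv A ** X) = (\<Sum>j\<in>UNIV. (\<chi> i. X$i$j) \<bullet> (B *v (\<chi> i. X$i$j)))"
          unfolding pB by (rule trace_cols)
        also have "\<dots> \<le> (\<Sum>j\<in>UNIV. \<Sum>m<M. (v m $ j)^2)"
        proof (rule sum_mono)
          fix j
          show "(\<chi> i. X$i$j) \<bullet> (B *v (\<chi> i. X$i$j)) \<le> (\<Sum>m<M. (v m $ j)^2)"
            apply (rule key_col[of e1 M u _ _ "\<lambda>m. v m $ j"])
            using e1 apply simp
             apply (simp add: A_def[symmetric] matrix_vector_mul_assoc AB)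
            by (simp add: X)
        qed
        also have "\<dots> = (\<Sum>m<M. (normR (v m))\<^sup>2)"
          unfolding normR_def power2_norm_eq_inner inner_vec_def by (simp add: power2_eq_square sum.swap[of _ UNIV])
        finally show ?thesis .
      qed
      have F: "Ffun \<nu> A \<le> e + (\<Sum>m<M. (normC \<nu> (u m))^2)"
        using F_bound[OF assms, of e1 M u] e1 unfolding A_def e1_def by simp
      have "?S \<le> ereal ((1/2) * Ffun \<nu> A + (1/2) * trace (transpose X ** pinv A ** X))"
        by (rule Inf_lower) (use psdA rng in blast)
      also have "\<dots> \<le> ereal c + ereal e"
      proof -
        have "(1/2) * Ffun \<nu> A + (1/2) * trace (transpose X ** pinv A ** X) \<le> c + e"
        proof -
          have "c = (1/2) * (\<Sum>m<M. (normC \<nu> (u m))\<^sup>2) + (1/2) * (\<Sum>m<M. (normR (v m))\<^sup>2)"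
            unfolding c_def by (simp add: sum.distrib algebra_simps)
          then show ?thesis using tr F e by linarith
        qed
        then show ?thesis by simp
      qed
      finally show "?S \<le> ereal c + ereal e" .
    qed
    then show ?thesis by (simp only: c_def)
   qed
   show ?thesis unfolding fD_def by (rule Inf_greatest) (use step in blast)
  qed
  ultimately show ?thesis by (simp add: le_INF_iff)
qed


end
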